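(* Let $m\in\mathbf{N}\cup\{\infty\}$, let $G$ be a group of isometries of the hyperbolic space $\mathbb{H}_m$, and let $f\in G$ be a parabolic isometry, with fixed point $\xi\in\partial\mathbb{H}_m$. Assume: (i) there are constants $C>0$, $C'>0$ and a point $x_0\in\mathbb{H}_m$ such that ${\sf{dist}}(f^n(x_0),x_0)\ge C\log n-C'$ for all sufficiently large $n$; (ii) there is a horoball $B$ centered at $\xi$ such that for every $g\in G$, either $gB=B$ or $gB\cap B=\emptyset$. Then $f$ is at most $n^{2/C}$-distorted in $G$: for every finitely generated subgroup $\Gamma\le G$ containing $f$, $\delta^\Gamma_f(n)\preceq n^{2/C}$. In particular $C\le2$, and if $C=2$ then $f$ is undistorted in $G$.
   Context: Model of $\mathbb{H}_m$: let $\mathcal{H}$ be a real Hilbert space of dimension $m+1$ with a unit vector $\mathbf{e}_0$ and Hilbert basis $(\mathbf{e}_i)_{i\in I}$ of $\mathbf{e}_0^\perp$; set $\langle u|u'\rangle=a_0a'_0-\sum_ia_ia'_i$. $\mathbb{H}_m$ is the sheet of $\{\langle u|u\rangle=1\}$ containing $\mathbf{e}_0$, with $\cosh{\sf{dist}}(u,u')=\langle u|u'\rangle$; boundary points are isotropic rays. Isometries are the elements of ${\sf{O}}(\langle\cdot|\cdot\rangle)$ preserving this sheet; an isometry is parabolic if it fixes no point of $\mathbb{H}_m$ but fixes an isotropic line, and has translation length $\inf_x{\sf{dist}}(x,h(x))=0$. For a boundary point given by an isotropic vector $\xi$ (with $\langle \xi|\mathbf{e}_0\rangle>0$) and $\epsilon>0$,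 the horoball is $H_\xi(\epsilon)=\{v\in\mathbb{H}_m: 0<\langle v|\xi\rangle<\epsilon\}$; a horoball centered at $\xi$ is any such set. Distortion: $f\preceq g$ means $f(x)\le Cg(C'x)+C''$ for constants; $\delta_{c,S}(n)=\sup\{k: c^k\in S^n\}$ for a finite symmetric generating set $S\ni1$ of $\Gamma$, with $\simeq$-class $\delta^\Gamma_c$; $c$ is undistorted in $G$ if $\delta^\Gamma_c(n)\preceq n$ for all finitely generated $\Gamma\le G$ containing $c$. *)

theory Defs
  imports "HOL-Analysis.Analysis"
begin

text \<open>Minkowski model: the Hilbert space of dimension m+1 is realised as
  real \<times> 'a, where 'a is a real Hilbert space (the orthogonal complement of e0,
  of arbitrary, possibly infinite, Hilbert dimension m); e0 = (1,0).\<close>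

definition mink :: "real \<times> ('a::real_inner) \<Rightarrow> real \<times> 'a \<Rightarrow> real" where
  "mink u v = fst u * fst v - inner (snd u) (snd v)"

definition e0 :: "real \<times> ('a::real_inner)" where
  "e0 = (1, 0)"

definition hyp :: "(real \<times> ('a::real_inner)) set" where
  "hyp = {v. mink v v = 1 \<and> mink v e0 > 0}"

definition hdist :: "real \<times> ('a::real_inner) \<Rightarrow> real \<times> 'a \<Rightarrow> real" where
  "hdist u v = arcosh (mink u v)"

definition isometry :: "(real \<times> ('a::real_inner) \<Rightarrow> real \<times> 'a) \<Rightarrow> bool" where
  "isometry h \<longleftrightarrow> bounded_linear h \<and> bij h \<and> (\<forall>u v. mink (h u) (h v) = mink u v)
      \<and> h ` hyp = hyp"

definition isotropic :: "real \<times> ('a::real_inner) \<Rightarrow> bool" where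
  "isotropic \<xi> \<longleftrightarrow> \<xi> \<noteq> 0 \<and> mink \<xi> \<xi> = 0"

definition fixes_line :: "(real \<times> ('a::real_inner) \<Rightarrow> real \<times> 'a) \<Rightarrow> real \<times> 'a \<Rightarrow> bool" where
  "fixes_line h \<xi> \<longleftrightarrow> (\<exists>c. h \<xi> = c *\<^sub>R \<xi>)"

definition translation_length :: "(real \<times> ('a::real_inner) \<Rightarrow> real \<times> 'a) \<Rightarrow> real" where
  "translation_length h = (INF x\<in>hyp. hdist x (h x))"

definition parabolic :: "(real \<times> ('a::real_inner) \<Rightarrow> real \<times> 'a) \<Rightarrow> bool" where
  "parabolic h \<longleftrightarrow> isometry h \<and> (\<forall>x\<in>hyp. h x \<noteq> x)
     \<and> (\<exists>\<xi>. isotropic \<xi> \<and> fixes_line h \<xi>) \<and> translation_length h = 0"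

definition horoball :: "real \<times> ('a::real_inner) \<Rightarrow> real \<Rightarrow> (real \<times> 'a) set" where
  "horoball \<xi> \<epsilon> = {v\<in>hyp. 0 < mink v \<xi> \<and> mink v \<xi> < \<epsilon>}"

definition isometry_group :: "(real \<times> ('a::real_inner) \<Rightarrow> real \<times> 'a) set \<Rightarrow> bool" where
  "isometry_group G \<longleftrightarrow> (\<forall>g\<in>G. isometry g) \<and> id \<in> G
     \<and> (\<forall>g\<in>G. \<forall>h\<in>G. g \<circ> h \<in> G) \<and> (\<forall>g\<in>G. inv g \<in> G)"

fun prods :: "('b \<Rightarrow> 'b) set \<Rightarrow> nat \<Rightarrow> ('b \<Rightarrow> 'b) set" where
  "prods S 0 = {id}"
| "prods S (Suc n) = {s \<circ> g | s g. s \<in> S \<and> g \<in> prods S n}"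

definition fin_sym_gen_set :: "('b \<Rightarrow> 'b) set \<Rightarrow> ('b \<Rightarrow> 'b) set \<Rightarrow> bool" where
  "fin_sym_gen_set S \<Gamma> \<longleftrightarrow> finite S \<and> id \<in> S \<and> (\<forall>s\<in>S. bij s \<and> inv s \<in> S)
     \<and> \<Gamma> = (\<Union>n. prods S n)"

definition delta :: "('b \<Rightarrow> 'b) set \<Rightarrow> ('b \<Rightarrow> 'b) \<Rightarrow> nat \<Rightarrow> nat" where
  "delta S c n = Sup {k. c ^^ k \<in> prods S n}"

definition preceq :: "(nat \<Rightarrow> real) \<Rightarrow> (real \<Rightarrow> real) \<Rightarrow> bool" where
  "preceq f g \<longleftrightarrow> (\<exists>A>0. \<exists>B>0. \<exists>D. \<forall>n. f n \<le> A * g (B * real n) + D)"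

definition undistorted :: "(real \<times> ('a::real_inner) \<Rightarrow> real \<times> 'a) \<Rightarrow> (real \<times> 'a \<Rightarrow> real \<times> 'a) set \<Rightarrow> bool" where
  "undistorted c G \<longleftrightarrow> (\<forall>\<Gamma> S. \<Gamma> \<subseteq> G \<and> c \<in> \<Gamma> \<and> fin_sym_gen_set S \<Gamma>
      \<longrightarrow> preceq (\<lambda>n. real (delta S c n)) (\<lambda>x. x))"

end

theory Submission imports Defs begin

lemma mink_add_left: "mink (x + y) z = mink x z + mink y z"
  by (simp add: mink_def inner_add_left algebra_simps)
lemma mink_diff_left: "mink (x - y) z = mink x z - mink y z"
  by (simp add: mink_def inner_diff_left algebra_simps)
lemma mink_scale_left: "mink (a *\<^sub>R x) z = a * mink x z"
  by (simp add: mink_def algebra_simps)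
lemma mink_comm: "mink x y = mink y x"
  by (simp add: mink_def inner_commute mult.commute)
lemma mink_add_right: "mink z (x + y) = mink z x + mink z y"
  by (simp add: mink_def inner_add_right algebra_simps)
lemma mink_diff_right: "mink z (x - y) = mink z x - mink z y"
  by (simp add: mink_def inner_diff_right algebra_simps)
lemma mink_scale_right: "mink z (a *\<^sub>R x) = a * mink z x"
  by (simp add: mink_def algebra_simps)
lemmas mink_lin = mink_add_left mink_diff_left mink_scale_left mink_add_right mink_diff_right mink_scale_right

lemma mink_e0: "mink v e0 = fst v"
  by (simp add: mink_def e0_def)

lemma mink_self: "mink v v = (fst v)\<^sup>2 - (norm (snd v))\<^sup>2"
  by (simp add: mink_def dot_square_norm power2_eq_square)

lemma xi_norm:
  assumes "mink \<xi> \<xi> = 0" "mink \<xi> e0 > 0"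
  shows "norm (snd \<xi>) = fst \<xi>" "fst \<xi> > 0"
proof -
  show p: "fst \<xi> > 0" using assms(2) by (simp add: mink_e0)
  have "(norm (snd \<xi>))\<^sup>2 = (fst \<xi>)\<^sup>2" using assms(1) by (simp add: mink_self)
  then show "norm (snd \<xi>) = fst \<xi>" using p
    by (metis norm_ge_zero power2_eq_iff_nonneg less_imp_le)
qed

lemma hyp_pos:
  assumes "v \<in> hyp" "mink \<xi> \<xi> = 0" "mink \<xi> e0 > 0"
  shows "mink v \<xi> > 0"
proof -
  have v0: "fst v > 0" using assms(1) by (simp add: hyp_def mink_e0)
  have v1: "(fst v)\<^sup>2 = 1 + (norm (snd v))\<^sup>2" using assms(1) by (simp add: hyp_def mink_self)
  have lt: "norm (snd v) < fst v"
  proof -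
    have "(norm (snd v))\<^sup>2 < (fst v)\<^sup>2" using v1 by simp
    then show ?thesis using v0 by (simp add: power2_less_imp_less)
  qed
  note x = xi_norm[OF assms(2,3)]
  have cs: "inner (snd v) (snd \<xi>) \<le> norm (snd v) * fst \<xi>" using norm_cauchy_schwarz[of "snd v" "snd \<xi>"] x by simp
  have "mink v \<xi> = fst v * fst \<xi> - inner (snd v) (snd \<xi>)" by (simp add: mink_def)
  also have "\<dots> \<ge> fst \<xi> * (fst v - norm (snd v))" using cs by (simp add: algebra_simps)
  finally show ?thesis using x(2) lt mult_pos_pos[of "fst \<xi>" "fst v - norm (snd v)"] by linarith
qed

lemma in_hyp:
  assumes "mink v v = 1" "mink v \<xi> > 0" "mink \<xi> \<xi> = 0" "mink \<xi> e0 > 0"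
  shows "v \<in> hyp"
proof -
  have v1: "(fst v)\<^sup>2 = 1 + (norm (snd v))\<^sup>2" using assms(1) by (simp add: mink_self)
  have lt: "norm (snd v) < \<bar>fst v\<bar>"
  proof -
    have "(norm (snd v))\<^sup>2 < (fst v)\<^sup>2" using v1 by simp
    then have "(norm (snd v))\<^sup>2 < (\<bar>fst v\<bar>)\<^sup>2" by simp
    then show ?thesis by (rule power2_less_imp_less) simp
  qed
  note x = xi_norm[OF assms(3,4)]
  have cs: "- inner (snd v) (snd \<xi>) \<le> norm (snd v) * fst \<xi>" using norm_cauchy_schwarz[of "- snd v" "snd \<xi>"] x by simp
  have "fst v > 0"
  proof (rule ccontr)
    assume "\<not> fst v > 0"
    then have n: "fst v < 0" using lt norm_ge_zero[of "snd v"] by (auto simp: abs_if split: if_split_asm)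
    have "mink v \<xi> = fst v * fst \<xi> - inner (snd v) (snd \<xi>)" by (simp add: mink_def)
    also have "\<dots> \<le> fst \<xi> * (fst v + norm (snd v))" using cs by (simp add: algebra_simps)
    also have "\<dots> < 0" using x(2) lt n by (simp add: mult_pos_neg)
    finally show False using assms(2) by simp
  qed
  then show ?thesis using assms(1) by (simp add: hyp_def mink_e0)
qed

lemma perp_neg:
  assumes "mink D \<xi> = 0" "mink \<xi> \<xi> = 0" "mink \<xi> e0 > 0"
  shows "mink D D \<le> 0"
proof -
  note x = xi_norm[OF assms(2,3)]
  have e: "fst D * fst \<xi> = inner (snd D) (snd \<xi>)" using assms(1) by (simp add: mink_def)
  have "\<bar>inner (snd D) (snd \<xi>)\<bar> \<le> norm (snd D) * fst \<xi>" using Cauchy_Schwarz_ineq2[of "snd D" "snd \<xi>"] x by simp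
  then have "\<bar>fst D * fst \<xi>\<bar> \<le> norm (snd D) * fst \<xi>" using e by simp
  then have "\<bar>fst D\<bar> * fst \<xi> \<le> norm (snd D) * fst \<xi>" using x by (simp add: abs_mult)
  then have "\<bar>fst D\<bar> \<le> norm (snd D)" using x(2) by simp
  then have "(fst D)\<^sup>2 \<le> (norm (snd D))\<^sup>2" by (metis abs_le_square_iff abs_norm_cancel)
  then show ?thesis by (simp add: mink_self)
qed

lemma perp_cs:
  assumes "mink A \<xi> = 0" "mink D \<xi> = 0" "mink \<xi> \<xi> = 0" "mink \<xi> e0 > 0"
  shows "2 * s * r * (- mink A D) \<le> s\<^sup>2 * (- mink A A) + r\<^sup>2 * (- mink D D)"
proof -
  have "mink (s *\<^sub>R A - r *\<^sub>R D) \<xi> = 0" using assms by (simp add: mink_lin)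
  from perp_neg[OF this assms(3,4)]
  have "mink (s *\<^sub>R A - r *\<^sub>R D) (s *\<^sub>R A - r *\<^sub>R D) \<le> 0" .
  then show ?thesis by (simp add: mink_lin mink_comm[of D A] power2_eq_square algebra_simps)
qed


lemma pair_ineq:
  assumes "p \<in> hyp" "q \<in> hyp" "mink \<xi> \<xi> = 0" "mink \<xi> e0 > 0"
  shows "(mink p \<xi>)\<^sup>2 + (mink q \<xi>)\<^sup>2 \<le> 2 * mink p \<xi> * mink q \<xi> * mink p q"
proof -
  let ?D = "mink q \<xi> *\<^sub>R p - mink p \<xi> *\<^sub>R q"
  have "mink ?D \<xi> = 0" by (simp add: mink_lin)
  from perp_neg[OF this assms(3,4)] have "mink ?D ?D \<le> 0" .
  moreover have "mink p p = 1" "mink q q = 1" using assms(1,2) by (auto simp: hyp_def)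
  ultimately show ?thesis
    by (simp add: mink_lin mink_comm[of q p] power2_eq_square algebra_simps)
qed

definition nrm :: "real \<times> ('a::real_inner) \<Rightarrow> real \<times> 'a \<Rightarrow> real \<times> 'a" where
  "nrm \<xi> v = (1 / mink v \<xi>) *\<^sub>R v"

lemma nrm_perp: "mink v \<xi> \<noteq> 0 \<Longrightarrow> mink (nrm \<xi> v) \<xi> = 1"
  by (simp add: nrm_def mink_lin)

lemma step_bound:
  assumes "p \<in> hyp" "q \<in> hyp" "mink p \<xi> \<ge> \<delta>" "mink q \<xi> \<ge> \<delta>" "\<delta> > 0"
    "mink p q \<le> K" "K \<ge> 0"
  shows "- mink (nrm \<xi> p - nrm \<xi> q) (nrm \<xi> p - nrm \<xi> q) \<le> 2 * K / \<delta>\<^sup>2"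
proof -
  define a where "a = 1 / mink p \<xi>"
  define b where "b = 1 / mink q \<xi>"
  have a: "0 < a" "a \<le> 1 / \<delta>" using assms by (auto simp: a_def frac_le)
  have b: "0 < b" "b \<le> 1 / \<delta>" using assms by (auto simp: b_def frac_le)
  have pp: "mink p p = 1" "mink q q = 1" using assms(1,2) by (auto simp: hyp_def)
  have e: "- mink (nrm \<xi> p - nrm \<xi> q) (nrm \<xi> p - nrm \<xi> q) = 2*a*b*mink p q - a\<^sup>2 - b\<^sup>2"
    unfolding nrm_def a_def[symmetric] b_def[symmetric]
    by (simp add: mink_lin mink_comm[of q p] pp power2_eq_square algebra_simps)
  have "a * b \<le> (1/\<delta>) * (1/\<delta>)" using a b assms(5) by (intro mult_mono) auto
  then have ab: "a * b \<le> 1 / \<delta>\<^sup>2" by (simp add: power2_eq_square)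
  have "2*a*b*mink p q \<le> 2*a*b*K" using a b assms(6) by simp
  also have "\<dots> = (2 * K) * (a * b)" by simp
  also have "\<dots> \<le> (2 * K) * (1 / \<delta>\<^sup>2)" using ab assms(7) by (intro mult_left_mono) auto
  also have "\<dots> = 2 * K / \<delta>\<^sup>2" by simp
  finally have "2*a*b*mink p q \<le> 2 * K / \<delta>\<^sup>2" .
  then show ?thesis using e zero_le_power2[of a] zero_le_power2[of b] by linarith
qed

lemma comb_bound:
  assumes "mink A \<xi> = 0" "mink D \<xi> = 0" "mink \<xi> \<xi> = 0" "mink \<xi> e0 > 0"
    "- mink A A \<le> (real n)\<^sup>2 * M" "- mink D D \<le> M" "M \<ge> 0" "n = 0 \<Longrightarrow> A = 0"
  shows "- mink (A + D) (A + D) \<le> (real (Suc n))\<^sup>2 * M"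
proof (cases "n = 0")
  case True
  then show ?thesis using assms by (simp add: mink_def)
next
  case False
  have cs: "2 * 1 * real n * (- mink A D) \<le> 1\<^sup>2 * (- mink A A) + (real n)\<^sup>2 * (- mink D D)"
    by (rule perp_cs[OF assms(1-4)])
  have "(real n)\<^sup>2 * (- mink D D) \<le> (real n)\<^sup>2 * M" using assms(6) mult_left_mono[of "- mink D D" M "(real n)\<^sup>2"] by simp
  moreover have cs': "2 * real n * (- mink A D) \<le> - mink A A + (real n)\<^sup>2 * (- mink D D)" using cs by simp
  ultimately have "2 * real n * (- mink A D) \<le> 2 * (real n)\<^sup>2 * M" using assms(5) by linarith
  then have "real n * (- mink A D) \<le> real n * (real n * M)" by (simp add: power2_eq_square algebra_simps)
  then have m: "- mink A D \<le> real n * M" by (rule mult_left_le_imp_le) (use False in auto)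
  have "- mink (A + D) (A + D) = - mink A A - 2 * mink A D - mink D D"
    by (simp add: mink_lin mink_comm[of D A])
  also have "\<dots> \<le> (real n)\<^sup>2 * M + 2 * real n * M + M" using m assms(5,6) by simp
  also have "\<dots> = (real (Suc n))\<^sup>2 * M" by (simp add: power2_eq_square algebra_simps)
  finally show ?thesis .
qed

lemma id_prods: "id \<in> S \<Longrightarrow> id \<in> prods S n"
proof (induction n)
  case (Suc n)
  then have "id \<circ> id \<in> prods S (Suc n)" by (simp only: prods.simps) blast
  then show ?case by (simp only: comp_id)
qed simp

lemma lin_aux: "4 * x + b \<le> 2 * (e - a) \<Longrightarrow> 0 < b \<Longrightarrow> a < e \<Longrightarrow> x < e - (a::real)"
  by (simp add: algebra_simps)

locale hsetup =
  fixes G :: "(real \<times> ('a::real_inner) \<Rightarrow> real \<times> 'a) set" and f :: "real \<times> 'a \<Rightarrow> real \<times> 'a"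
    and \<xi> x0 :: "real \<times> 'a" and \<epsilon> :: real
  assumes G: "isometry_group G" and fG: "f \<in> G"
    and xi0: "mink \<xi> \<xi> = 0" and xi1: "mink \<xi> e0 > 0" and fl: "fixes_line f \<xi>"
    and x0: "x0 \<in> hyp" and eps: "\<epsilon> > 0"
    and B: "\<forall>g\<in>G. g ` horoball \<xi> \<epsilon> = horoball \<xi> \<epsilon> \<or> g ` horoball \<xi> \<epsilon> \<inter> horoball \<xi> \<epsilon> = {}"
begin

lemma iso_G: "g \<in> G \<Longrightarrow> isometry g" using G by (simp add: isometry_group_def)
lemma comp_G: "g \<in> G \<Longrightarrow> h \<in> G \<Longrightarrow> g \<circ> h \<in> G" using G by (simp add: isometry_group_def)
lemma id_G: "id \<in> G" using G by (simp add: isometry_group_def)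
lemma inv_G: "g \<in> G \<Longrightarrow> inv g \<in> G" using G by (simp add: isometry_group_def)

lemma lin_G: "g \<in> G \<Longrightarrow> g (a *\<^sub>R x + b *\<^sub>R y) = a *\<^sub>R g x + b *\<^sub>R g y"
proof -
  assume "g \<in> G"
  then have "linear g" using iso_G by (simp add: isometry_def bounded_linear.linear)
  then show ?thesis by (simp add: linear_add linear_scale)
qed

lemma mink_G: assumes "g \<in> G" shows "mink (g u) (g v) = mink u v"
  using iso_G[OF assms] unfolding isometry_def by blast

lemma hyp_G: assumes "g \<in> G" "v \<in> hyp" shows "g v \<in> hyp"
  using iso_G[OF assms(1)] assms(2) unfolding isometry_def by blast

lemma inj_G: "g \<in> G \<Longrightarrow> inj g"
  using iso_G by (simp add: isometry_def bij_is_inj)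

lemma upos: "v \<in> hyp \<Longrightarrow> mink v \<xi> > 0"
  using hyp_pos xi0 xi1 by blast

lemma horo_iff: "v \<in> hyp \<Longrightarrow> v \<in> horoball \<xi> \<epsilon> \<longleftrightarrow> mink v \<xi> < \<epsilon>"
  using upos by (auto simp: horoball_def)

lemma horo_hyp: "v \<in> horoball \<xi> \<epsilon> \<Longrightarrow> v \<in> hyp \<and> mink v \<xi> < \<epsilon>"
  by (auto simp: horoball_def)

lemma exists_u:
  assumes "a > 0" shows "\<exists>y\<in>hyp. mink y \<xi> = a"
proof -
  define \<beta> where "\<beta> = mink x0 \<xi>"
  have b0: "\<beta> > 0" using upos x0 by (simp add: \<beta>_def)
  define s where "s = a / \<beta>"
  have s: "s > 0" using assms b0 by (simp add: s_def)
  define b where "b = (1 - s\<^sup>2) / (2 * s * \<beta>)"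
  define y where "y = s *\<^sub>R x0 + b *\<^sub>R \<xi>"
  have xx: "mink x0 x0 = 1" using x0 by (simp add: hyp_def)
  have "mink y y = s\<^sup>2 + 2 * s * b * \<beta>"
    by (simp add: y_def mink_lin xx xi0 mink_comm[of \<xi> x0] \<beta>_def[symmetric] power2_eq_square algebra_simps)
  also have "\<dots> = 1" using s b0 by (simp add: b_def field_simps)
  finally have yy: "mink y y = 1" .
  have yu: "mink y \<xi> = a" using b0 by (simp add: y_def mink_lin xi0 \<beta>_def[symmetric] s_def)
  have "y \<in> hyp" using in_hyp[OF yy _ xi0 xi1] yu assms by simp
  then show ?thesis using yu by blast
qed

lemma boundary:
  assumes y: "y \<in> hyp" "mink y \<xi> = \<epsilon>" and g: "g \<in> G"
  shows "\<epsilon> \<le> mink (g y) \<xi>"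
proof (rule ccontr)
  assume "\<not> \<epsilon> \<le> mink (g y) \<xi>"
  define a where "a = mink (g y) \<xi>"
  have alt: "a < \<epsilon>" using \<open>\<not> _\<close> by (simp add: a_def)
  have gyh: "g y \<in> hyp" using hyp_G[OF g y(1)] .
  have apos: "a > 0" using upos[OF gyh] by (simp add: a_def)
  define c where "c = mink (g \<xi>) \<xi>"
  define \<eta> where "\<eta> = min (1/2) ((\<epsilon> - a) * \<epsilon> / (4 * \<bar>c\<bar> + 1))"
  have \<eta>1: "\<eta> \<le> 1/2" unfolding \<eta>_def by (rule min.cobounded1)
  have \<eta>2: "\<eta> \<le> (\<epsilon> - a) * \<epsilon> / (4 * \<bar>c\<bar> + 1)" unfolding \<eta>_def by (rule min.cobounded2)
  have \<eta>0: "\<eta> > 0" using alt eps unfolding \<eta>_def by (auto intro!: divide_pos_pos)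
  note \<eta> = \<eta>0 \<eta>1 \<eta>2
  define t where "t = 1 - \<eta>"
  have t: "t \<ge> 1/2" "t < 1" using \<eta> by (auto simp: t_def)
  define b where "b = (1 - t\<^sup>2) / (2 * t * \<epsilon>)"
  have tt: "t * t < 1 * 1" using t by (intro mult_strict_mono) auto
  have bpos: "b > 0" unfolding b_def using tt t eps by (intro divide_pos_pos) (auto simp: power2_eq_square)
  have bb: "b \<le> 2 * \<eta> / \<epsilon>"
  proof -
    have "1 - t\<^sup>2 = \<eta> * (1 + t)" by (simp add: t_def power2_eq_square algebra_simps)
    also have "\<dots> \<le> \<eta> * (4 * t)" using \<eta> t by (intro mult_left_mono) auto
    finally have "1 - t\<^sup>2 \<le> (2 * \<eta> / \<epsilon>) * (2 * t * \<epsilon>)" using eps by (simp add: algebra_simps)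
    moreover have "2 * t * \<epsilon> > 0" using t eps by simp
    ultimately show ?thesis by (simp add: b_def pos_divide_le_eq)
  qed
  define z where "z = t *\<^sub>R y + b *\<^sub>R \<xi>"
  have yy: "mink y y = 1" using y by (simp add: hyp_def)
  have z1: "mink z z = t\<^sup>2 + 2 * t * b * \<epsilon>"
    by (simp add: z_def mink_lin yy xi0 mink_comm[of \<xi> y] y(2) power2_eq_square algebra_simps)
  have z2: "2 * t * b * \<epsilon> = 1 - t\<^sup>2"
  proof -
    have "2 * t * \<epsilon> \<noteq> 0" using t eps by simp
    then show ?thesis unfolding b_def by simp
  qed
  have zz: "mink z z = 1" using z1 z2 by simp
  have zu: "mink z \<xi> = t * \<epsilon>" by (simp add: z_def mink_lin xi0 y(2))
  have zh: "z \<in> hyp" using in_hyp[OF zz _ xi0 xi1] zu t eps by simp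
  have zB: "z \<in> horoball \<xi> \<epsilon>" using zh zu t eps by (simp add: horo_iff)
  have gz: "mink (g z) \<xi> = t * a + b * c"
    by (simp add: z_def lin_G[OF g] mink_lin a_def c_def)
  define ca where "ca = \<bar>c\<bar>"
  have ca: "ca \<ge> 0" "c \<le> ca" by (auto simp: ca_def)
  have c4: "4 * ca + 1 > 0" using ca by simp
  have h1: "b * \<epsilon> \<le> 2 * \<eta>" using bb eps by (simp add: le_divide_eq)
  have h2: "\<eta> * (4 * ca + 1) \<le> (\<epsilon> - a) * \<epsilon>" using \<eta>(3) c4 by (simp add: le_divide_eq ca_def)
  have "b * \<epsilon> * (4 * ca + 1) \<le> 2 * \<eta> * (4 * ca + 1)" using h1 c4 by (intro mult_right_mono) auto
  also have "\<dots> \<le> 2 * ((\<epsilon> - a) * \<epsilon>)" using h2 by simp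
  finally have h3: "\<epsilon> * (b * (4 * ca + 1)) \<le> \<epsilon> * (2 * (\<epsilon> - a))" by (simp add: algebra_simps)
  have h4: "b * (4 * ca + 1) \<le> 2 * (\<epsilon> - a)" using mult_left_le_imp_le[OF h3] eps by simp
  have h5: "4 * (b * ca) + b \<le> 2 * (\<epsilon> - a)" using h4 by (simp add: algebra_simps)
  have "b * c \<le> b * ca" using bpos ca by (simp add: mult_left_mono)
  then have h6: "4 * (b * c) + b \<le> 2 * (\<epsilon> - a)" using h5 by linarith
  have bc: "b * c < \<epsilon> - a" by (rule lin_aux[OF h6 bpos alt])
  have "t * a \<le> 1 * a" using t apos by (intro mult_right_mono) auto
  then have "t * a \<le> a" by simp
  then have gzlt: "mink (g z) \<xi> < \<epsilon>" using gz bc by simp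
  have gzB: "g z \<in> horoball \<xi> \<epsilon>" using hyp_G[OF g zh] gzlt by (simp add: horo_iff)
  have "g z \<in> g ` horoball \<xi> \<epsilon>" using zB by (rule imageI)
  then have "g z \<in> g ` horoball \<xi> \<epsilon> \<inter> horoball \<xi> \<epsilon>" using gzB by (rule IntI)
  then have ne: "g ` horoball \<xi> \<epsilon> \<inter> horoball \<xi> \<epsilon> \<noteq> {}" by (metis empty_iff)
  have disj: "g ` horoball \<xi> \<epsilon> = horoball \<xi> \<epsilon> \<or> g ` horoball \<xi> \<epsilon> \<inter> horoball \<xi> \<epsilon> = {}"
    by (rule bspec[OF B g])
  have eqB: "g ` horoball \<xi> \<epsilon> = horoball \<xi> \<epsilon>" using disj ne by metis
  have "g y \<in> horoball \<xi> \<epsilon>" using gyh alt by (simp add: horo_iff a_def)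
  then have "g y \<in> g ` horoball \<xi> \<epsilon>" using eqB by simp
  then obtain w where w: "w \<in> horoball \<xi> \<epsilon>" "g y = g w" by blast
  then have "w = y" using injD[OF inj_G[OF g] w(2)[symmetric]] by simp

  then show False using w y by (simp add: horo_iff)
qed

lemma fix_xi: "f \<xi> = \<xi>"
proof -
  obtain c where c: "f \<xi> = c *\<^sub>R \<xi>" using fl by (auto simp: fixes_line_def)
  have key0: "c * mink (f v) \<xi> = mink v \<xi>" for v
    using mink_G[OF fG, of v \<xi>] c by (simp add: mink_lin)
  have cpos: "c > 0"
  proof -
    have "mink (f x0) \<xi> > 0" "mink x0 \<xi> > 0" using upos hyp_G[OF fG x0] x0 by auto
    moreover have "\<not> c \<le> 0"
    proof
      assume "c \<le> 0"
      then have "c * mink (f x0) \<xi> \<le> 0" using calculation(1) by (simp add: mult_nonpos_nonneg)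
      then show False using key0[of x0] calculation(2) by linarith
    qed
    ultimately show ?thesis by linarith
  qed
  have key: "mink (f v) \<xi> = mink v \<xi> / c" for v using key0[of v] cpos by (simp add: field_simps)
  have fB: "f ` horoball \<xi> \<epsilon> = horoball \<xi> \<epsilon>"
  proof -
    define a where "a = min \<epsilon> (\<epsilon> * c) / 2"
    have a: "a > 0" "a < \<epsilon>" "a / c < \<epsilon>" using eps cpos
      by (auto simp: a_def min_def field_simps)
    obtain v where v: "v \<in> hyp" "mink v \<xi> = a" using exists_u a(1) by blast
    have vB: "v \<in> horoball \<xi> \<epsilon>" using v a by (simp add: horo_iff)
    have fvB: "f v \<in> horoball \<xi> \<epsilon>" using hyp_G[OF fG v(1)] key[of v] v a by (simp add: horo_iff)
    have "f v \<in> f ` horoball \<xi> \<epsilon>" using vB by (rule imageI)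
    then have "f v \<in> f ` horoball \<xi> \<epsilon> \<inter> horoball \<xi> \<epsilon>" using fvB by (rule IntI)
    then have ne: "f ` horoball \<xi> \<epsilon> \<inter> horoball \<xi> \<epsilon> \<noteq> {}" by (metis empty_iff)
    have disj: "f ` horoball \<xi> \<epsilon> = horoball \<xi> \<epsilon> \<or> f ` horoball \<xi> \<epsilon> \<inter> horoball \<xi> \<epsilon> = {}"
      by (rule bspec[OF B fG])
    show ?thesis using disj ne by metis
  qed
  have "c = 1"
  proof (rule ccontr)
    assume "c \<noteq> 1"
    then consider "c < 1" | "c > 1" by linarith
    then show False
    proof cases
      case 1
      define r where "r = (c + 1) / 2"
      have r: "c < r" "r < 1" using 1 by (auto simp: r_def)
      have "r * \<epsilon> > 0" using cpos eps r by simp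
      then obtain v where v: "v \<in> hyp" "mink v \<xi> = r * \<epsilon>" using exists_u by blast
      have "r * \<epsilon> < 1 * \<epsilon>" using r eps by (intro mult_strict_right_mono) auto
      then have "v \<in> horoball \<xi> \<epsilon>" using v by (simp add: horo_iff)
      then have "f v \<in> f ` horoball \<xi> \<epsilon>" by (rule imageI)
      then have "f v \<in> horoball \<xi> \<epsilon>" using fB by simp
      then have "r * \<epsilon> / c < \<epsilon>" using key[of v] v by (simp add: horo_iff hyp_G[OF fG])
      then have l: "r * \<epsilon> < \<epsilon> * c" by (simp add: pos_divide_less_eq[OF cpos])
      have "c * \<epsilon> < r * \<epsilon>" using r eps by (intro mult_strict_right_mono) auto
      then show False using l by (simp add: mult.commute)
    next
      case 2
      obtain w where w: "w \<in> hyp" "mink w \<xi> = \<epsilon>" using exists_u eps by blast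
      have "\<epsilon> * 1 < \<epsilon> * c" using 2 eps by (intro mult_strict_left_mono) auto
      then have "\<epsilon> / c < \<epsilon>" by (simp add: pos_divide_less_eq[OF cpos])
      then have "f w \<in> horoball \<xi> \<epsilon>" using hyp_G[OF fG w(1)] key[of w] w
        by (simp add: horo_iff)
      then have "f w \<in> f ` horoball \<xi> \<epsilon>" using fB by simp
      then obtain w' where "w' \<in> horoball \<xi> \<epsilon>" "f w = f w'" by blast
      moreover then have "w' = w" using injD[OF inj_G[OF fG], of w' w] by simp
      ultimately have "w \<in> horoball \<xi> \<epsilon>" by simp
      then show False using w by (simp add: horo_iff)
    qed
  qed
  then show ?thesis using c by simp
qed

lemma u_fpow: "mink ((f ^^ k) v) \<xi> = mink v \<xi>"
proof (induction k arbitrary: v)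
  case (Suc k)
  have "mink (f ((f ^^ k) v)) \<xi> = mink ((f ^^ k) v) \<xi>"
    using mink_G[OF fG, of "(f ^^ k) v" \<xi>] fix_xi by simp
  then show ?case using Suc by simp
qed simp

lemma mink_fpow: "mink ((f ^^ k) u) ((f ^^ k) v) = mink u v"
  by (induction k) (simp_all add: mink_G[OF fG])

lemma hyp_fpow: "(f ^^ k) x0 \<in> hyp"
  by (induction k) (simp_all add: x0 hyp_G[OF fG])

lemma lower: "\<exists>\<delta>>0. \<forall>g\<in>G. \<delta> \<le> mink (g x0) \<xi>"
proof -
  obtain y where y: "y \<in> hyp" "mink y \<xi> = \<epsilon>" using exists_u eps by blast
  define K0 where "K0 = mink y x0"
  have b0: "mink x0 \<xi> > 0" using upos x0 by simp
  have K0: "K0 > 0"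
  proof -
    have "(mink y \<xi>)\<^sup>2 + (mink x0 \<xi>)\<^sup>2 \<le> 2 * mink y \<xi> * mink x0 \<xi> * K0"
      using pair_ineq[OF y(1) x0 xi0 xi1] by (simp add: K0_def)
    moreover have "(mink x0 \<xi>)\<^sup>2 > 0" using b0 by simp
    moreover have "(mink y \<xi>)\<^sup>2 \<ge> 0" by simp
    ultimately have "0 < 2 * mink y \<xi> * mink x0 \<xi> * K0" by linarith
    then show ?thesis using y eps b0 by (auto simp: zero_less_mult_iff mult_less_0_iff)
  qed
  have "\<epsilon> / (2 * K0) \<le> mink (g x0) \<xi>" if g: "g \<in> G" for g
  proof -
    define p where "p = mink (g y) \<xi>"
    define q where "q = mink (g x0) \<xi>"
    have p: "p \<ge> \<epsilon>" using boundary[OF y g] by (simp add: p_def)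
    have q: "q > 0" using upos hyp_G[OF g x0] by (simp add: q_def)
    have "p\<^sup>2 + q\<^sup>2 \<le> 2 * p * q * K0"
      using pair_ineq[OF hyp_G[OF g y(1)] hyp_G[OF g x0] xi0 xi1] mink_G[OF g]
      by (simp add: p_def q_def K0_def)
    then have "p\<^sup>2 \<le> 2 * p * q * K0" using zero_le_power2[of q] by linarith
    then have "p * p \<le> p * (2 * q * K0)" by (simp add: power2_eq_square algebra_simps)
    then have "p \<le> 2 * q * K0" using p eps by simp
    then have "\<epsilon> \<le> 2 * q * K0" using p by simp
    then show ?thesis using K0 by (simp add: q_def[symmetric] pos_divide_le_eq mult_ac)
  qed
  then show ?thesis using eps K0 by (intro exI[of _ "\<epsilon> / (2 * K0)"]) simp
qed

lemma prods_G: "S \<subseteq> G \<Longrightarrow> prods S n \<subseteq> G"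
  by (induction n) (auto simp: id_G intro: comp_G)

lemma walk:
  assumes S: "S \<subseteq> G" and d: "\<delta> > 0" "\<forall>g\<in>G. \<delta> \<le> mink (g x0) \<xi>"
    and K: "\<forall>s\<in>S. mink (s x0) x0 \<le> K" "K \<ge> 0"
  shows "g \<in> prods S n \<Longrightarrow> h \<in> G \<Longrightarrow>
    - mink (nrm \<xi> (h (g x0)) - nrm \<xi> (h x0)) (nrm \<xi> (h (g x0)) - nrm \<xi> (h x0))
      \<le> (real n)\<^sup>2 * (2 * K / \<delta>\<^sup>2)"
proof (induction n arbitrary: g h)
  case 0
  then show ?case by (simp add: mink_def)
next
  case (Suc n)
  obtain s g' where sg: "g = s \<circ> g'" "s \<in> S" "g' \<in> prods S n" using Suc.prems by auto
  have sG: "s \<in> G" using sg S by auto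
  have hs: "h \<circ> s \<in> G" using comp_G Suc.prems sG by blast
  define A where "A = nrm \<xi> (h (s (g' x0))) - nrm \<xi> (h (s x0))"
  define D where "D = nrm \<xi> (h (s x0)) - nrm \<xi> (h x0)"
  have IH: "- mink A A \<le> (real n)\<^sup>2 * (2 * K / \<delta>\<^sup>2)"
    using Suc.IH[OF sg(3) hs] by (simp add: A_def)
  have g'G: "g' \<in> G" using prods_G[OF S] sg by auto
  have h1: "h (s (g' x0)) \<in> hyp" "h (s x0) \<in> hyp" "h x0 \<in> hyp"
    using hyp_G x0 Suc.prems sG g'G by auto
  have nz: "mink (h (s (g' x0))) \<xi> \<noteq> 0" "mink (h (s x0)) \<xi> \<noteq> 0" "mink (h x0) \<xi> \<noteq> 0"
    using upos[OF h1(1)] upos[OF h1(2)] upos[OF h1(3)] by linarith+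
  have Ap: "mink A \<xi> = 0" using nz by (simp add: A_def mink_lin nrm_perp)
  have Dp: "mink D \<xi> = 0" using nz by (simp add: D_def mink_lin nrm_perp)
  have DD: "- mink D D \<le> 2 * K / \<delta>\<^sup>2" unfolding D_def
  proof (rule step_bound[OF h1(2,3) _ _ d(1) _ K(2)])
    show "\<delta> \<le> mink (h (s x0)) \<xi>" using d(2) hs by (metis comp_apply)
    show "\<delta> \<le> mink (h x0) \<xi>" using d(2) Suc.prems by blast
    show "mink (h (s x0)) (h x0) \<le> K" using mink_G[OF Suc.prems(2)] K(1) sg(2) by simp
  qed
  have A0: "n = 0 \<Longrightarrow> A = 0" using sg(3) by (simp add: A_def)
  have M0: "2 * K / \<delta>\<^sup>2 \<ge> 0" using K d by simp
  have "- mink (A + D) (A + D) \<le> (real (Suc n))\<^sup>2 * (2 * K / \<delta>\<^sup>2)"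
    by (rule comb_bound[OF Ap Dp xi0 xi1 IH DD M0 A0])
  moreover have "A + D = nrm \<xi> (h (g x0)) - nrm \<xi> (h x0)" by (simp add: A_def D_def sg)
  ultimately show ?case by simp
qed


lemma dist_bound:
  assumes S: "S \<subseteq> G" and d: "\<delta> > 0" "\<forall>g\<in>G. \<delta> \<le> mink (g x0) \<xi>"
    and K: "\<forall>s\<in>S. mink (s x0) x0 \<le> K" "K \<ge> 0"
    and fk: "(f ^^ k) \<in> prods S n"
  shows "1 \<le> mink ((f ^^ k) x0) x0 \<and> mink ((f ^^ k) x0) x0 \<le> 1 + (mink x0 \<xi>)\<^sup>2 * (K / \<delta>\<^sup>2) * (real n)\<^sup>2"
proof -
  define \<beta> where "\<beta> = mink x0 \<xi>"
  define m where "m = mink ((f ^^ k) x0) x0"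
  define p where "p = (f ^^ k) x0"
  have b0: "\<beta> > 0" using upos x0 by (simp add: \<beta>_def)
  have ph: "p \<in> hyp" using hyp_fpow by (simp add: p_def)
  have pu: "mink p \<xi> = \<beta>" using u_fpow by (simp add: p_def \<beta>_def)
  have pp: "mink p p = 1" "mink x0 x0 = 1" using ph x0 by (auto simp: hyp_def)
  have W: "- mink (nrm \<xi> (id p) - nrm \<xi> (id x0)) (nrm \<xi> (id p) - nrm \<xi> (id x0))
      \<le> (real n)\<^sup>2 * (2 * K / \<delta>\<^sup>2)"
    using walk[OF S d K fk id_G] by (simp add: p_def)
  have nd: "nrm \<xi> p - nrm \<xi> x0 = (1 / \<beta>) *\<^sub>R (p - x0)"
    by (simp add: nrm_def pu \<beta>_def[symmetric] scaleR_diff_right)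
  have ww: "mink (p - x0) (p - x0) = 2 - 2 * m"
    by (simp add: mink_lin pp mink_comm[of x0 p] m_def p_def[symmetric])
  have "mink (nrm \<xi> p - nrm \<xi> x0) (nrm \<xi> p - nrm \<xi> x0) = (1 / \<beta>) * ((1 / \<beta>) * mink (p - x0) (p - x0))"
    unfolding nd by (simp only: mink_scale_left mink_scale_right)
  then have "- mink (nrm \<xi> p - nrm \<xi> x0) (nrm \<xi> p - nrm \<xi> x0) = (2 * m - 2) / \<beta>\<^sup>2"
    unfolding ww using b0 by (simp add: power2_eq_square field_simps)
  with W have "(2 * m - 2) / \<beta>\<^sup>2 \<le> (real n)\<^sup>2 * (2 * K / \<delta>\<^sup>2)" by simp
  then have "2 * m - 2 \<le> (real n)\<^sup>2 * (2 * K / \<delta>\<^sup>2) * \<beta>\<^sup>2" using b0 by (simp add: pos_divide_le_eq)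
  moreover obtain M' where M': "M' = K / \<delta>\<^sup>2" by blast
  moreover have "(real n)\<^sup>2 * (2 * K / \<delta>\<^sup>2) * \<beta>\<^sup>2 = 2 * (\<beta>\<^sup>2 * M' * (real n)\<^sup>2)"
    unfolding M' by (simp add: mult_ac)
  ultimately have "m \<le> 1 + \<beta>\<^sup>2 * M' * (real n)\<^sup>2" by linarith
  then have up: "m \<le> 1 + \<beta>\<^sup>2 * (K / \<delta>\<^sup>2) * (real n)\<^sup>2" using M' by simp
  have "\<beta>\<^sup>2 + \<beta>\<^sup>2 \<le> 2 * \<beta> * \<beta> * m"
    using pair_ineq[OF ph x0 xi0 xi1] by (simp add: pu \<beta>_def[symmetric] m_def p_def[symmetric])
  then have "\<beta> * \<beta> * 1 \<le> \<beta> * \<beta> * m" by (simp add: power2_eq_square)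
  then have "1 \<le> m" using b0 by (simp add: mult_le_cancel_left_pos)
  then show ?thesis using up by (simp add: m_def \<beta>_def)
qed

lemma arcosh_le: "(m::real) \<ge> 1 \<Longrightarrow> m \<le> X \<Longrightarrow> arcosh m \<le> ln (2 * X)"
proof -
  assume m: "m \<ge> 1" "m \<le> X"
  have "sqrt (m\<^sup>2 - 1) \<le> sqrt (m\<^sup>2)" by (rule real_sqrt_le_mono) simp
  then have s: "sqrt (m\<^sup>2 - 1) \<le> m" using m by simp
  have pos: "0 < m + sqrt (m\<^sup>2 - 1)" using m by (simp add: add_pos_nonneg)
  have "arcosh m = ln (m + sqrt (m\<^sup>2 - 1))" using m by (simp add: arcosh_real_def)
  also have "\<dots> \<le> ln (2 * X)" using pos s m by (subst ln_le_cancel_iff) auto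
  finally show ?thesis .
qed

lemma core:
  assumes S: "S \<subseteq> G" "finite S" and C: "C > 0" "C' > 0"
    and growth: "\<forall>\<^sub>F n in sequentially. hdist ((f ^^ n) x0) x0 \<ge> C * ln (real n) - C'"
  shows "\<exists>E>0. \<exists>D. \<forall>n k. (f ^^ k) \<in> prods S n \<longrightarrow> real k \<le> E * real n powr (2 / C) + D"
proof -
  obtain \<delta> where d: "\<delta> > 0" "\<forall>g\<in>G. \<delta> \<le> mink (g x0) \<xi>" using lower by blast
  define K where "K = Max (insert 1 ((\<lambda>s. mink (s x0) x0) ` S))"
  have K1: "K \<ge> 1" unfolding K_def using S(2) by simp
  have K: "\<forall>s\<in>S. mink (s x0) x0 \<le> K" unfolding K_def using S(2) by simp
  define L where "L = (mink x0 \<xi>)\<^sup>2 * (K / \<delta>\<^sup>2)"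
  have L: "L \<ge> 0" using K1 by (simp add: L_def)
  obtain N0 where N0: "\<And>k. k \<ge> N0 \<Longrightarrow> hdist ((f ^^ k) x0) x0 \<ge> C * ln (real k) - C'"
    using growth unfolding eventually_sequentially by blast
  define E where "E = exp (C' / C) * (2 + 2 * L) powr (1 / C)"
  define D where "D = real N0 + 1 + exp (C' / C) * 2 powr (1 / C)"
  have E: "E > 0" using L by (simp add: E_def)
  have D: "D \<ge> real N0 + 1" "D \<ge> exp (C' / C) * 2 powr (1 / C)" by (auto simp: D_def)
  have "real k \<le> E * real n powr (2 / C) + D" if fk: "(f ^^ k) \<in> prods S n" for n k
  proof -
    have En: "E * real n powr (2 / C) \<ge> 0" using E by simp
    define m where "m = mink ((f ^^ k) x0) x0"
    have mb: "1 \<le> m" "m \<le> 1 + L * (real n)\<^sup>2"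
      using dist_bound[OF S(1) d K _ fk] K1 by (auto simp: m_def L_def)
    show ?thesis
    proof (cases "k \<ge> N0 \<and> k \<ge> 1")
      case False
      then have "real k \<le> real N0 + 1" by auto
      then show ?thesis using D En by linarith
    next
      case True
      define X where "X = 1 + L * (real n)\<^sup>2"
      have X: "X \<ge> 1" using L by (simp add: X_def)
      have "C * ln (real k) - C' \<le> arcosh m" using N0[of k] True by (simp add: hdist_def m_def)
      also have "\<dots> \<le> ln (2 * X)" unfolding X_def by (rule arcosh_le[OF mb(1) mb(2)])
      finally have "ln (real k) \<le> (C' + ln (2 * X)) / C" using C by (simp add: pos_le_divide_eq algebra_simps)
      then have "exp (ln (real k)) \<le> exp ((C' + ln (2 * X)) / C)" by simp
      moreover have "exp (ln (real k)) = real k" using True by simp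
      moreover have "exp ((C' + ln (2 * X)) / C) = exp (C' / C) * (2 * X) powr (1 / C)"
        using X by (simp add: powr_def exp_add[symmetric] add_divide_distrib)
      ultimately have kb: "real k \<le> exp (C' / C) * (2 * X) powr (1 / C)" by simp
      show ?thesis
      proof (cases "n = 0")
        case True
        then have "X = 1" by (simp add: X_def)
        then show ?thesis using kb D En by simp
      next
        case False
        then have n1: "real n \<ge> 1" by simp
        have "2 * X \<le> (2 + 2 * L) * (real n)\<^sup>2"
        proof -
          have "(real n)\<^sup>2 \<ge> 1" using n1 by simp
          then show ?thesis using L by (simp add: X_def algebra_simps)
        qed
        then have "(2 * X) powr (1 / C) \<le> ((2 + 2 * L) * (real n)\<^sup>2) powr (1 / C)"
          using X C by (intro powr_mono2) auto
        also have "\<dots> = (2 + 2 * L) powr (1 / C) * ((real n)\<^sup>2) powr (1 / C)"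
          using L by (simp add: powr_mult)
        also have "((real n)\<^sup>2) powr (1 / C) = real n powr (2 / C)"
        proof -
          have "real n powr (real 2) = (real n) ^ 2" using n1 by (intro powr_realpow) simp
          then have e: "(real n)\<^sup>2 = real n powr 2" by simp
          show ?thesis unfolding e powr_powr by simp
        qed
        finally have "(2 * X) powr (1 / C) \<le> (2 + 2 * L) powr (1 / C) * real n powr (2 / C)" .
        then have "exp (C' / C) * (2 * X) powr (1 / C) \<le> E * real n powr (2 / C)"
          by (simp add: E_def mult.assoc)
        moreover have "D \<ge> 0" using D(1) by linarith
        ultimately show ?thesis using kb by linarith
      qed
    qed
  qed
  then show ?thesis using E by blast
qed

end

theorem theorem4p1:
  fixes G :: "(real \<times> ('a::{real_inner,complete_space}) \<Rightarrow> real \<times> 'a) set"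
    and f :: "real \<times> 'a \<Rightarrow> real \<times> 'a"
    and \<xi> :: "real \<times> 'a"
    and C C' :: real and x0 :: "real \<times> 'a" and \<epsilon> :: real
  assumes G: "isometry_group G"
    and fG: "f \<in> G"
    and par: "parabolic f"
    and xi: "isotropic \<xi>" "mink \<xi> e0 > 0" "fixes_line f \<xi>"
    and C: "C > 0" "C' > 0" "x0 \<in> hyp"
    and growth: "\<forall>\<^sub>F n in sequentially. hdist ((f ^^ n) x0) x0 \<ge> C * ln (real n) - C'"
    and eps: "\<epsilon> > 0"
    and B: "\<forall>g\<in>G. g ` horoball \<xi> \<epsilon> = horoball \<xi> \<epsilon> \<or> g ` horoball \<xi> \<epsilon> \<inter> horoball \<xi> \<epsilon> = {}"
  shows "(\<forall>\<Gamma> S. \<Gamma> \<subseteq> G \<and> f \<in> \<Gamma> \<and> fin_sym_gen_set S \<Gamma>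
            \<longrightarrow> preceq (\<lambda>n. real (delta S f n)) (\<lambda>x. x powr (2 / C)))
         \<and> C \<le> 2 \<and> (C = 2 \<longrightarrow> undistorted f G)"
proof -
  have xi0: "mink \<xi> \<xi> = 0" using xi(1) by (simp add: isotropic_def)
  interpret hsetup G f \<xi> x0 \<epsilon>
    using G fG xi0 xi(2,3) C(3) eps B by unfold_locales auto
  let ?p = "2 / C"
  have P1: "\<forall>\<Gamma> S. \<Gamma> \<subseteq> G \<and> f \<in> \<Gamma> \<and> fin_sym_gen_set S \<Gamma>
            \<longrightarrow> preceq (\<lambda>n. real (delta S f n)) (\<lambda>x. x powr (2 / C))"
  proof (intro allI impI)
    fix \<Gamma> S assume H: "\<Gamma> \<subseteq> G \<and> f \<in> \<Gamma> \<and> fin_sym_gen_set S \<Gamma>"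
    then have fin: "finite S" "id \<in> S" and Gam: "\<Gamma> = (\<Union>n. prods S n)"
      by (auto simp: fin_sym_gen_set_def)
    have "S \<subseteq> \<Gamma>"
    proof
      fix s assume "s \<in> S"
      then have "s \<circ> id \<in> prods S (Suc 0)" by (simp only: prods.simps) auto
      then have "s \<in> prods S (Suc 0)" by (simp only: comp_id)
      then show "s \<in> \<Gamma>" unfolding Gam by blast
    qed
    then have SG: "S \<subseteq> G" using H by blast
    obtain E D where ED: "E > 0" "\<And>n k. (f ^^ k) \<in> prods S n \<Longrightarrow> real k \<le> E * real n powr ?p + D"
      using core[OF SG fin(1) C(1,2) growth] by blast
    have "real (delta S f n) \<le> E * (1 * real n) powr ?p + (D + 1)" for n
    proof -
      define X where "X = {k. (f ^^ k) \<in> prods S n}"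
      define b where "b = E * real n powr ?p + D"
      have X0: "0 \<in> X" using id_prods[OF fin(2)] by (simp add: X_def)
      have b0: "b \<ge> 0" using ED(2)[of 0 n] X0 by (simp add: X_def b_def)
      have "k \<le> nat \<lceil>b\<rceil>" if "k \<in> X" for k
      proof -
        have "real k \<le> b" using ED(2) that by (simp add: X_def b_def)
        then have "real k \<le> real (nat \<lceil>b\<rceil>)" using b0 by linarith
        then show ?thesis by simp
      qed
      then have "Sup X \<le> nat \<lceil>b\<rceil>" using X0 by (intro cSup_least) auto
      then have "real (Sup X) \<le> real (nat \<lceil>b\<rceil>)" by simp
      also have "\<dots> \<le> b + 1" using b0 by simp
      finally show ?thesis by (simp add: delta_def X_def b_def)
    qed
    then show "preceq (\<lambda>n. real (delta S f n)) (\<lambda>x. x powr (2 / C))"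
      unfolding preceq_def using ED(1) by (intro exI[of _ E] conjI exI[of _ 1] exI[of _ "D + 1"]) auto
  qed
  define S0 where "S0 = {id, f, inv f}"
  have S0G: "S0 \<subseteq> G" using fG id_G inv_G by (auto simp: S0_def)
  obtain E0 D0 where ED0: "E0 > 0" "\<And>n k. (f ^^ k) \<in> prods S0 n \<Longrightarrow> real k \<le> E0 * real n powr ?p + D0"
    using core[OF S0G _ C(1,2) growth] by (auto simp: S0_def)
  have fpow: "(f ^^ n) \<in> prods S0 n" for n
  proof (induction n)
    case (Suc n)
    have "f \<in> S0" by (simp add: S0_def)
    then show ?case using Suc by (simp only: prods.simps funpow.simps) blast
  qed (simp add: id_def)
  have lin: "real n \<le> E0 * real n powr ?p + D0" for n using ED0(2)[OF fpow] .
  have C2: "C \<le> 2"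
  proof (rule ccontr)
    assume "\<not> C \<le> 2"
    then have p1: "?p < 1" using C(1) by simp
    define q where "q = 1 - ?p"
    have q: "q > 0" using p1 by (simp add: q_def)
    define D' where "D' = max D0 0"
    define n where "n = nat \<lceil>max (2 * D' + 1) ((2 * E0) powr (1 / q))\<rceil> + 1"
    have n1: "real n \<ge> 2 * D' + 1" "real n \<ge> (2 * E0) powr (1 / q)"
      unfolding n_def by linarith+
    have npos: "real n > 0" using n1 by (simp add: D'_def)
    have "((2 * E0) powr (1 / q)) powr q \<le> real n powr q"
      using n1 q by (intro powr_mono2) auto
    then have nq: "2 * E0 \<le> real n powr q" using q ED0(1) by (simp add: powr_powr)
    have split: "real n powr ?p * real n powr q = real n"
      using npos by (simp add: powr_add[symmetric] q_def)
    have A1: "(2 * E0) * real n powr ?p \<le> real n powr q * real n powr ?p"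
      by (rule mult_right_mono[OF nq]) simp
    have A2: "real n powr q * real n powr ?p = real n" using split by (simp add: mult.commute)
    have A3: "(2 * E0) * real n powr ?p = 2 * (E0 * real n powr ?p)" by simp
    from A1 have "2 * (E0 * real n powr ?p) \<le> real n" by (simp only: A2 A3)
    then have h: "E0 * real n powr ?p \<le> real n / 2" by simp
    have "D0 \<le> D'" by (simp add: D'_def)
    then have "real n \<le> real n / 2 + D'" using lin[of n] h by linarith
    then show False using n1 by linarith
  qed
  have U: "C = 2 \<longrightarrow> undistorted f G"
  proof
    assume c2: "C = 2"
    show "undistorted f G"
      unfolding undistorted_def
    proof (intro allI impI)
      fix \<Gamma> S assume H: "\<Gamma> \<subseteq> G \<and> f \<in> \<Gamma> \<and> fin_sym_gen_set S \<Gamma>"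
      then have "preceq (\<lambda>n. real (delta S f n)) (\<lambda>x. x powr 1)" using P1 c2 by auto
      then obtain A B D where ABD: "A > 0" "B > 0"
        "\<And>n. real (delta S f n) \<le> A * (B * real n) powr 1 + D"
        unfolding preceq_def by blast
      have "real (delta S f n) \<le> A * (B * real n) + D" for n
      proof -
        have "B * real n \<ge> 0" using ABD(2) by simp
        then have "(B * real n) powr 1 = B * real n" by simp
        then show ?thesis using ABD(3)[of n] by simp
      qed
      then show "preceq (\<lambda>n. real (delta S f n)) (\<lambda>x. x)"
        unfolding preceq_def using ABD(1,2) by blast
    qed
  qed
  show ?thesis using P1 C2 U by blast
qed

end
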